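(* Almost all graphs $G$ have a $\chi_{harm}$-mate; i.e. the harmonious polynomial $\chi_{harm}$ is weakly distinguishing.
   Context: All graphs are finite and simple. For $k\in\mathbb{N}$, a harmonious colouring of $G$ with $k$ colours is a map $f:V(G)\to[k]$ that is a proper colouring and such that for all $i,j\in[k]$ the induced subgraph $G[f^{-1}(i)\cup f^{-1}(j)]$ has at most one edge. $\chi_{harm}(G;\lambda)$ denotes the number of harmonious colourings of $G$ with $\lambda$ colours; it is a polynomial in $\lambda$. For a graph polynomial $P$, $H$ is a $P$-mate of $G$ if $P(G)=P(H)$ but $H\not\cong G$; $G$ is $P$-unique if it has no $P$-mate. Let $\mathcal{G}(n)$ be the set of isomorphism classes of graphs on $n$ vertices and $U_P(n)$ the set of $P$-unique graphs in $\mathcal{G}(n)$; $P$ is weakly distinguishing if $\lim_{n\to\infty}|U_P(n)|/|\mathcal{G}(n)|=0$. *)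

theory Defs
  imports Complex_Main "HOL-Library.FuncSet"
begin

definition graphs :: "nat \<Rightarrow> nat set set set" where
  "graphs n = {E. E \<subseteq> {{u, v} | u v. u < n \<and> v < n \<and> u \<noteq> v}}"

definition graph_iso :: "nat \<Rightarrow> nat set set \<Rightarrow> nat \<Rightarrow> nat set set \<Rightarrow> bool" where
  "graph_iso n E m F \<longleftrightarrow> (\<exists>p. bij_betw p {0..<n} {0..<m} \<and> (\<lambda>e. p ` e) ` E = F)"

definition harmonious :: "nat \<Rightarrow> nat set set \<Rightarrow> nat \<Rightarrow> (nat \<Rightarrow> nat) \<Rightarrow> bool" where
  "harmonious n E k f \<longleftrightarrow>
     f \<in> {0..<n} \<rightarrow>\<^sub>E {0..<k} \<and>
     (\<forall>u v. {u, v} \<in> E \<longrightarrow> f u \<noteq> f v) \<and>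
     (\<forall>i<k. \<forall>j<k. card {e \<in> E. e \<subseteq> {x \<in> {0..<n}. f x = i \<or> f x = j}} \<le> 1)"

definition harm_count :: "nat \<Rightarrow> nat set set \<Rightarrow> nat \<Rightarrow> nat" where
  "harm_count n E k = card {f. harmonious n E k f}"

text \<open>chi_harm(G) = chi_harm(H) as polynomials, i.e. equal at every natural lambda.\<close>
definition harm_eq :: "nat \<Rightarrow> nat set set \<Rightarrow> nat \<Rightarrow> nat set set \<Rightarrow> bool" where
  "harm_eq n E m F \<longleftrightarrow> (\<forall>k. harm_count n E k = harm_count m F k)"

definition harm_unique :: "nat \<Rightarrow> nat set set \<Rightarrow> bool" where
  "harm_unique n E \<longleftrightarrow>
     (\<forall>m F. F \<in> graphs m \<and> harm_eq n E m F \<longrightarrow> graph_iso n E m F)"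

definition iso_classes :: "nat \<Rightarrow> nat set set set set" where
  "iso_classes n = graphs n // {(E, F). E \<in> graphs n \<and> F \<in> graphs n \<and> graph_iso n E n F}"

definition unique_classes :: "nat \<Rightarrow> nat set set set set" where
  "unique_classes n = {C \<in> iso_classes n. \<forall>E \<in> C. harm_unique n E}"

end

theory Submission
  imports Defs "HOL-Combinatorics.Permutations" "HOL-Real_Asymp.Real_Asymp"
begin


definition pairs :: "nat \<Rightarrow> nat set set" where
  "pairs n = {{u, v} | u v. u < n \<and> v < n \<and> u \<noteq> v}"

lemma graphs_eq: "graphs n = Pow (pairs n)"
  unfolding graphs_def pairs_def by auto

lemma pairs_eq: "pairs n = {B. B \<subseteq> {0..<n} \<and> card B = 2}"
  unfolding pairs_def card_2_iff by (auto; blast)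

lemma finite_pairs: "finite (pairs n)"
  unfolding pairs_eq by (rule finite_subset[of _ "Pow {0..<n}"]) auto

lemma card_pairs: "card (pairs n) = n choose 2"
  unfolding pairs_eq using n_subsets[of "{0..<n}" 2] by simp

lemma finite_graphs: "finite (graphs n)"
  unfolding graphs_eq using finite_pairs by simp

lemma card_graphs: "card (graphs n) = 2 ^ card (pairs n)"
  unfolding graphs_eq using finite_pairs card_Pow by blast

lemma pairs_memD: "e \<in> pairs n \<Longrightarrow> \<exists>u v. e = {u,v} \<and> u < n \<and> v < n \<and> u \<noteq> v"
  unfolding pairs_def by auto

lemma graph_edge: "E \<in> graphs n \<Longrightarrow> {u,v} \<in> E \<Longrightarrow> u < n \<and> v < n \<and> u \<noteq> v"
  unfolding graphs_def by (auto simp: doubleton_eq_iff)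

lemma graph_finite: "E \<in> graphs n \<Longrightarrow> finite E"
  using finite_graphs finite_pairs graphs_eq by (metis PowD finite_subset)

definition act :: "(nat \<Rightarrow> nat) \<Rightarrow> nat set set \<Rightarrow> nat set set" where
  "act p E = (\<lambda>e. p ` e) ` E"

definition perms :: "nat \<Rightarrow> (nat \<Rightarrow> nat) set" where
  "perms n = {p. p permutes {0..<n}}"

lemma card_perms: "card (perms n) = fact n"
  unfolding perms_def by (rule card_permutations) auto

lemma finite_perms: "finite (perms n)"
  unfolding perms_def by (rule finite_permutations) auto

lemma act_comp: "act (p \<circ> q) E = act p (act q E)"
  unfolding act_def by (auto simp: image_comp)

lemma act_id: "act id E = E"
  unfolding act_def by auto

lemma act_pairs: "p permutes {0..<n} \<Longrightarrow> e \<in> pairs n \<Longrightarrow> p ` e \<in> pairs n"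
proof -
  assume p: "p permutes {0..<n}" and e: "e \<in> pairs n"
  then obtain u v where "e = {u,v}" "u < n" "v < n" "u \<noteq> v" using pairs_memD by blast
  moreover have "p u < n" "p v < n" using p \<open>u<n\<close> \<open>v<n\<close> permutes_in_image[OF p] by auto
  moreover have "p u \<noteq> p v" using p \<open>u\<noteq>v\<close> permutes_inj by (metis injD)
  ultimately show ?thesis unfolding pairs_def by auto
qed

lemma act_graphs: "p \<in> perms n \<Longrightarrow> E \<in> graphs n \<Longrightarrow> act p E \<in> graphs n"
  unfolding graphs_eq perms_def act_def using act_pairs by blast

lemma graph_iso_perm:
  assumes E: "E \<in> graphs n"
  shows "graph_iso n E n F \<longleftrightarrow> (\<exists>p\<in>perms n. act p E = F)"
proof
  assume "graph_iso n E n F"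
  then obtain p where bp: "bij_betw p {0..<n} {0..<n}" and F: "(\<lambda>e. p ` e) ` E = F"
    unfolding graph_iso_def by blast
  define s where "s = (\<lambda>x. if x \<in> {0..<n} then p x else x)"
  have "bij_betw s {0..<n} {0..<n}" using bp unfolding s_def by (rule bij_betw_cong[THEN iffD1, rotated]) auto
  hence sp: "s permutes {0..<n}" by (rule bij_imp_permutes) (simp add: s_def)
  have "act s E = F"
  proof -
    have "s ` e = p ` e" if "e \<in> E" for e
    proof -
      have "e \<subseteq> {0..<n}" using that E pairs_memD unfolding graphs_eq by fastforce
      thus ?thesis unfolding s_def by auto
    qed
    thus ?thesis unfolding act_def F[symmetric] by (auto intro!: image_cong)
  qed
  thus "\<exists>p\<in>perms n. act p E = F" using sp perms_def by blast
next
  assume "\<exists>p\<in>perms n. act p E = F"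
  then obtain p where "p permutes {0..<n}" "act p E = F" unfolding perms_def by blast
  thus "graph_iso n E n F" unfolding graph_iso_def act_def using permutes_imp_bij by blast
qed



definition isoR :: "nat \<Rightarrow> (nat set set \<times> nat set set) set" where
  "isoR n = {(E, F). E \<in> graphs n \<and> F \<in> graphs n \<and> graph_iso n E n F}"

lemma iso_classes_eq: "iso_classes n = graphs n // isoR n"
  unfolding iso_classes_def isoR_def by simp

lemma inv_act: assumes "p \<in> perms n" shows "act (inv p) (act p E) = E"
proof -
  have "inv p \<circ> p = id" using assms unfolding perms_def by (simp add: permutes_inv_o)
  thus ?thesis by (metis act_comp act_id)
qed

lemma inv_perms: "p \<in> perms n \<Longrightarrow> inv p \<in> perms n"
  unfolding perms_def by (simp add: permutes_inv)

lemma comp_perms: "p \<in> perms n \<Longrightarrow> q \<in> perms n \<Longrightarrow> p \<circ> q \<in> perms n"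
  unfolding perms_def by (simp add: permutes_compose)

lemma id_perms: "id \<in> perms n"
  unfolding perms_def by (simp add: permutes_id)

lemma equiv_isoR: "equiv (graphs n) (isoR n)"
proof (rule equivI)
  show "isoR n \<subseteq> graphs n \<times> graphs n" unfolding isoR_def by auto
  show "refl_on (graphs n) (isoR n)"
  proof (rule refl_onI)
    fix x assume x: "x \<in> graphs n"
    have "graph_iso n x n x" using graph_iso_perm[OF x] id_perms act_id by blast
    thus "(x, x) \<in> isoR n" unfolding isoR_def using x by blast
  qed
  show "sym (isoR n)"
  proof (rule symI)
    fix x y assume "(x, y) \<in> isoR n"
    hence x: "x \<in> graphs n" and y: "y \<in> graphs n" and "graph_iso n x n y" unfolding isoR_def by auto
    then obtain p where p: "p \<in> perms n" "act p x = y" using graph_iso_perm[OF x] by blast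
    have "act (inv p) y = x" using inv_act[OF p(1)] p(2) by blast
    hence "graph_iso n y n x" using graph_iso_perm[OF y] inv_perms[OF p(1)] by blast
    thus "(y, x) \<in> isoR n" unfolding isoR_def using x y by blast
  qed
  show "trans (isoR n)"
  proof (rule transI)
    fix x y z assume "(x, y) \<in> isoR n" "(y, z) \<in> isoR n"
    hence x: "x \<in> graphs n" and y: "y \<in> graphs n" and z: "z \<in> graphs n"
      and "graph_iso n x n y" "graph_iso n y n z" unfolding isoR_def by auto
    obtain p where "p \<in> perms n" "act p x = y" using graph_iso_perm[OF x] \<open>graph_iso n x n y\<close> by blast
    moreover obtain q where "q \<in> perms n" "act q y = z" using graph_iso_perm[OF y] \<open>graph_iso n y n z\<close> by blast
    ultimately have "act (q \<circ> p) x = z" "q \<circ> p \<in> perms n" using act_comp comp_perms by auto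
    hence "graph_iso n x n z" using graph_iso_perm[OF x] by blast
    thus "(x, z) \<in> isoR n" unfolding isoR_def using x z by blast
  qed
qed

lemma class_eq:
  assumes C: "C \<in> iso_classes n" and G0: "G0 \<in> C"
  shows "C = (\<lambda>p. act p G0) ` perms n"
proof -
  obtain x where x: "x \<in> graphs n" "C = isoR n `` {x}"
    using C unfolding iso_classes_eq by (auto elim: quotientE)
  have "(x, G0) \<in> isoR n" using x G0 by auto
  hence "C = isoR n `` {G0}" using x equiv_class_eq[OF equiv_isoR] by metis
  moreover have g0: "G0 \<in> graphs n" using \<open>(x, G0) \<in> isoR n\<close> unfolding isoR_def by auto
  ultimately show ?thesis
  proof -
    assume Ceq: "C = isoR n `` {G0}"
    show ?thesis
    proof (rule set_eqI)
      fix F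
      have "F \<in> C \<longleftrightarrow> F \<in> graphs n \<and> graph_iso n G0 n F" unfolding Ceq isoR_def using g0 by blast
      also have "\<dots> \<longleftrightarrow> F \<in> (\<lambda>p. act p G0) ` perms n"
      proof
        assume "F \<in> graphs n \<and> graph_iso n G0 n F"
        then obtain p where "p \<in> perms n" "act p G0 = F" using graph_iso_perm[OF g0] by blast
        thus "F \<in> (\<lambda>p. act p G0) ` perms n" by blast
      next
        assume "F \<in> (\<lambda>p. act p G0) ` perms n"
        then obtain p where p: "p \<in> perms n" "F = act p G0" by blast
        have "F \<in> graphs n" using act_graphs[OF p(1) g0] p(2) by simp
        moreover have "graph_iso n G0 n F" using graph_iso_perm[OF g0] p by blast
        ultimately show "F \<in> graphs n \<and> graph_iso n G0 n F" by blast
      qed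
      finally show "F \<in> C \<longleftrightarrow> F \<in> (\<lambda>p. act p G0) ` perms n" .
    qed
  qed
qed

lemma class_sub: "C \<in> iso_classes n \<Longrightarrow> C \<subseteq> graphs n"
  unfolding iso_classes_eq using equiv_isoR in_quotient_imp_subset by blast

lemma class_nonempty: "C \<in> iso_classes n \<Longrightarrow> C \<noteq> {}"
  unfolding iso_classes_eq using equiv_isoR in_quotient_imp_non_empty by blast

lemma finite_iso_classes: "finite (iso_classes n)"
  unfolding iso_classes_eq by (rule finite_quotient[OF finite_graphs equiv_type[OF equiv_isoR]])

lemma card_class_le: assumes "C \<in> iso_classes n" shows "card C \<le> fact n"
proof -
  obtain G0 where "G0 \<in> C" using class_nonempty[OF assms] by blast
  hence "C = (\<lambda>p. act p G0) ` perms n" using class_eq[OF assms] by blast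
  hence "card C \<le> card (perms n)" using card_image_le[OF finite_perms] by simp
  thus ?thesis using card_perms by simp
qed

lemma classes_lower: "2 ^ card (pairs n) \<le> card (iso_classes n) * fact n"
proof -
  have "\<Union>(iso_classes n) = graphs n"
    unfolding iso_classes_eq by (rule Union_quotient[OF equiv_isoR])
  hence "2 ^ card (pairs n) = card (\<Union>(iso_classes n))"
    using card_graphs by simp
  also have "\<dots> \<le> sum card (iso_classes n)" by (rule card_Union_le_sum_card)
  also have "\<dots> \<le> card (iso_classes n) * fact n"
  proof -
    have "sum card (iso_classes n) \<le> of_nat (card (iso_classes n)) * fact n"
      by (rule sum_bounded_above) (rule card_class_le)
    thus ?thesis by simp
  qed
  finally show ?thesis .
qed

definition aut :: "nat \<Rightarrow> nat set set \<Rightarrow> (nat \<Rightarrow> nat) set" where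
  "aut n G = {p \<in> perms n. act p G = G}"

lemma fact_le_aut_sum:
  assumes C: "C \<in> iso_classes n"
  shows "fact n \<le> (\<Sum>G\<in>C. card (aut n G))"
proof -
  obtain G0 where G0: "G0 \<in> C" using class_nonempty[OF C] by blast
  have finC: "finite C" using finite_subset[OF class_sub[OF C] finite_graphs] .
  have "fact n = card (perms n)" using card_perms by simp
  also have "\<dots> = (\<Sum>G\<in>C. card {p \<in> perms n. act p G0 = G})"
  proof -
    have sub: "(\<lambda>p. act p G0) ` perms n \<subseteq> C" using class_eq[OF C G0] by simp
    have "(\<Sum>G\<in>C. \<Sum>p\<in>{p. p \<in> perms n \<and> act p G0 = G}. (1::nat)) = (\<Sum>p\<in>perms n. 1)"
      by (rule sum.group[OF finite_perms finC sub])
    thus ?thesis by simp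
  qed
  also have "\<dots> \<le> (\<Sum>G\<in>C. card (aut n G))"
  proof (rule sum_mono)
    fix G assume "G \<in> C"
    then obtain t where t: "t \<in> perms n" "act t G0 = G" using class_eq[OF C G0] by auto
    have "inj_on (\<lambda>p. p \<circ> inv t) {p \<in> perms n. act p G0 = G}"
    proof (rule inj_onI)
      fix p q assume "p \<circ> inv t = q \<circ> inv t"
      hence "p \<circ> inv t \<circ> t = q \<circ> inv t \<circ> t" by simp
      moreover have "inv t \<circ> t = id" using t unfolding perms_def by (simp add: permutes_inv_o)
      ultimately show "p = q" by (simp add: o_assoc[symmetric])
    qed
    moreover have "(\<lambda>p. p \<circ> inv t) ` {p \<in> perms n. act p G0 = G} \<subseteq> aut n G"
    proof
      fix x assume "x \<in> (\<lambda>p. p \<circ> inv t) ` {p \<in> perms n. act p G0 = G}"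
      then obtain p where p: "p \<in> perms n" "act p G0 = G" "x = p \<circ> inv t" by auto
      have "act x G = act p (act (inv t) (act t G0))" using p t by (simp add: act_comp)
      also have "\<dots> = G" using inv_act[OF t(1)] p by simp
      finally show "x \<in> aut n G" unfolding aut_def using p comp_perms inv_perms t by auto
    qed
    moreover have "finite (aut n G)" unfolding aut_def using finite_perms by simp
    ultimately show "card {p \<in> perms n. act p G0 = G} \<le> card (aut n G)"
      by (rule card_inj_on_le)
  qed
  finally show ?thesis .
qed



definition good :: "nat \<Rightarrow> nat set set \<Rightarrow> bool" where
  "good n E \<longleftrightarrow> (\<forall>u<n. \<forall>v<n. u \<noteq> v \<longrightarrow> {u,v} \<in> E \<or> (\<exists>w<n. {u,w} \<in> E \<and> {v,w} \<in> E))"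

lemma card_le1I: "(\<And>x y. x \<in> A \<Longrightarrow> y \<in> A \<Longrightarrow> x = y) \<Longrightarrow> card A \<le> 1"
proof (cases "A = {}")
  case False
  assume h: "\<And>x y. x \<in> A \<Longrightarrow> y \<in> A \<Longrightarrow> x = y"
  then obtain a where "a \<in> A" using False by blast
  hence "A = {a}" using h by blast
  thus ?thesis by simp
qed simp

lemma good_harmonious:
  assumes E: "E \<in> graphs n" and g: "good n E"
  shows "harmonious n E k f \<longleftrightarrow> (f \<in> {0..<n} \<rightarrow>\<^sub>E {0..<k} \<and> inj_on f {0..<n})"
proof
  assume h: "harmonious n E k f"
  hence pi: "f \<in> {0..<n} \<rightarrow>\<^sub>E {0..<k}" unfolding harmonious_def by blast
  have proper: "\<And>u v. {u,v} \<in> E \<Longrightarrow> f u \<noteq> f v" using h unfolding harmonious_def by blast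
  have cnt: "\<And>i j. i < k \<Longrightarrow> j < k \<Longrightarrow> card {e \<in> E. e \<subseteq> {x \<in> {0..<n}. f x = i \<or> f x = j}} \<le> 1"
    using h unfolding harmonious_def by blast
  have "inj_on f {0..<n}"
  proof (rule inj_onI, rule ccontr)
    fix u v assume u: "u \<in> {0..<n}" and v: "v \<in> {0..<n}" and fe: "f u = f v" and ne: "u \<noteq> v"
    from g u v ne have "{u,v} \<in> E \<or> (\<exists>w<n. {u,w} \<in> E \<and> {v,w} \<in> E)" unfolding good_def by auto
    thus False
    proof
      assume "{u,v} \<in> E" thus False using proper fe by blast
    next
      assume "\<exists>w<n. {u,w} \<in> E \<and> {v,w} \<in> E"
      then obtain w where w: "w < n" "{u,w} \<in> E" "{v,w} \<in> E" by blast
      have ik: "f u < k" "f w < k" using pi u w by auto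
      let ?T = "{e \<in> E. e \<subseteq> {x \<in> {0..<n}. f x = f u \<or> f x = f w}}"
      have sub: "{{u,w},{v,w}} \<subseteq> ?T" using w u v fe by auto
      have "{u,w} \<noteq> {v,w}" using ne graph_edge[OF E w(2)] by (auto simp: doubleton_eq_iff)
      hence "card {{u,w},{v,w}} = 2" by simp
      moreover have "finite ?T" using graph_finite[OF E] by simp
      moreover have "card {{u,w},{v,w}} \<le> card ?T" by (rule card_mono[OF \<open>finite ?T\<close> sub])
      ultimately have "2 \<le> card ?T" by linarith
      thus False using cnt[OF ik] by simp
    qed
  qed
  thus "f \<in> {0..<n} \<rightarrow>\<^sub>E {0..<k} \<and> inj_on f {0..<n}" using pi by blast
next
  assume a: "f \<in> {0..<n} \<rightarrow>\<^sub>E {0..<k} \<and> inj_on f {0..<n}"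
  hence inj: "inj_on f {0..<n}" by blast
  have injf: "\<And>x y. x < n \<Longrightarrow> y < n \<Longrightarrow> f x = f y \<Longrightarrow> x = y"
    using inj unfolding inj_on_def by simp
  have proper: "\<forall>u v. {u, v} \<in> E \<longrightarrow> f u \<noteq> f v"
  proof (intro allI impI)
    fix u v assume "{u, v} \<in> E"
    hence "u < n" "v < n" "u \<noteq> v" using graph_edge[OF E] by blast+
    thus "f u \<noteq> f v" using injf by blast
  qed
  have "card {e \<in> E. e \<subseteq> {x \<in> {0..<n}. f x = i \<or> f x = j}} \<le> 1" for i j
  proof (rule card_le1I)
    let ?S = "{x \<in> {0..<n}. f x = i \<or> f x = j}"
    have key: "x = y \<or> x = z \<or> y = z" if "x \<in> ?S" "y \<in> ?S" "z \<in> ?S" for x y z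
    proof -
      have "x < n" "y < n" "z < n" using that by auto
      moreover have "f x = f y \<or> f x = f z \<or> f y = f z" using that by auto
      ultimately show ?thesis using injf by blast
    qed
    fix e1 e2 assume e1: "e1 \<in> {e \<in> E. e \<subseteq> ?S}" and e2: "e2 \<in> {e \<in> E. e \<subseteq> ?S}"
    obtain a b where ab: "e1 = {a,b}" "a \<noteq> b" using e1 E pairs_memD unfolding graphs_eq by blast
    obtain c d where cd: "e2 = {c,d}" "c \<noteq> d" using e2 E pairs_memD unfolding graphs_eq by blast
    have S: "a \<in> ?S" "b \<in> ?S" "c \<in> ?S" "d \<in> ?S" using e1 e2 ab cd by auto
    have "c \<in> {a,b}" using key[OF S(1,2,3)] ab(2) by blast
    moreover have "d \<in> {a,b}" using key[OF S(1,2,4)] ab(2) by blast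
    ultimately have "c \<in> {a,b}" "d \<in> {a,b}" by auto
    thus "e1 = e2" using ab cd by auto
  qed
  thus "harmonious n E k f" unfolding harmonious_def using a proper by blast
qed

lemma good_harm_eq:
  assumes "E \<in> graphs n" "good n E" "F \<in> graphs n" "good n F"
  shows "harm_eq n E n F"
proof -
  have "harmonious n E k = harmonious n F k" for k
    using good_harmonious[OF assms(1,2)] good_harmonious[OF assms(3,4)] by (intro ext) simp
  thus ?thesis unfolding harm_eq_def harm_count_def by simp
qed

definition badC :: "nat \<Rightarrow> nat set set set set" where
  "badC n = {C \<in> iso_classes n. \<forall>E\<in>C. \<not> good n E}"

lemma unique_le: "card (unique_classes n) \<le> card (badC n) + 1"
proof -
  let ?U = "unique_classes n"
  have "card (?U - badC n) \<le> 1"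
  proof (rule card_le1I)
    fix C1 C2 assume c1: "C1 \<in> ?U - badC n" and c2: "C2 \<in> ?U - badC n"
    then obtain E1 E2 where e: "E1 \<in> C1" "good n E1" "E2 \<in> C2" "good n E2"
      unfolding badC_def unique_classes_def by auto
    have C1: "C1 \<in> iso_classes n" and C2: "C2 \<in> iso_classes n"
      using c1 c2 unfolding unique_classes_def by auto
    have hu: "harm_unique n E1" using c1 e unfolding unique_classes_def by auto
    have g: "E1 \<in> graphs n" "E2 \<in> graphs n" using class_sub C1 C2 e by auto
    have "graph_iso n E1 n E2" using hu g good_harm_eq[OF g(1) e(2) g(2) e(4)]
      unfolding harm_unique_def by blast
    hence "(E1, E2) \<in> isoR n" unfolding isoR_def using g by auto
    hence "E2 \<in> C1" using in_quotient_imp_closed[OF equiv_isoR] C1 e(1) unfolding iso_classes_eq by blast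
    thus "C1 = C2" using quotient_disj[OF equiv_isoR] C1 C2 e(3) unfolding iso_classes_eq by blast
  qed
  moreover have "?U \<subseteq> badC n \<union> (?U - badC n)" by blast
  hence "card ?U \<le> card (badC n \<union> (?U - badC n))"
    by (rule card_mono[rotated]) (use finite_iso_classes in \<open>auto simp: badC_def unique_classes_def\<close>)
  ultimately show ?thesis using card_Un_le[of "badC n" "?U - badC n"] by linarith
qed



lemma block_count:
  fixes P :: "'a set" and I :: "'i set" and B :: "'i \<Rightarrow> 'a set" and Al :: "'i \<Rightarrow> 'a set set"
    and S :: "'a set set"
  assumes finP: "finite P" and finI: "finite I" and BP: "\<forall>i\<in>I. B i \<subseteq> P"
    and disj: "\<forall>i\<in>I. \<forall>j\<in>I. i \<noteq> j \<longrightarrow> B i \<inter> B j = {}"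
    and SP: "S \<subseteq> Pow P" and SA: "\<forall>E\<in>S. \<forall>i\<in>I. E \<inter> B i \<in> Al i"
    and AlB: "\<forall>i\<in>I. Al i \<subseteq> Pow (B i)"
  shows "card S \<le> 2 ^ (card P - (\<Sum>i\<in>I. card (B i))) * (\<Prod>i\<in>I. card (Al i))"
proof -
  define U where "U = (\<Union>i\<in>I. B i)"
  have finB: "\<forall>i\<in>I. finite (B i)" using BP finP finite_subset by blast
  have cU: "card U = (\<Sum>i\<in>I. card (B i))"
    unfolding U_def by (rule card_UN_disjoint[OF finI]) (use finB disj in auto)
  have UP: "U \<subseteq> P" unfolding U_def using BP by blast
  have cPU: "card (P - U) = card P - (\<Sum>i\<in>I. card (B i))"
    using card_Diff_subset[OF finite_subset[OF UP finP] UP] cU by simp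
  define phi where "phi = (\<lambda>E. (E - U, restrict (\<lambda>i. E \<inter> B i) I))"
  have inj: "inj_on phi S"
  proof (rule inj_onI)
    fix E E' assume E: "E \<in> S" and E': "E' \<in> S" and eq: "phi E = phi E'"
    have d: "E - U = E' - U" using eq unfolding phi_def by simp
    have r: "E \<inter> B i = E' \<inter> B i" if "i \<in> I" for i
    proof -
      have "restrict (\<lambda>i. E \<inter> B i) I i = restrict (\<lambda>i. E' \<inter> B i) I i" using eq unfolding phi_def by simp
      thus ?thesis using that by simp
    qed
    show "E = E'"
    proof (rule set_eqI)
      fix x show "x \<in> E \<longleftrightarrow> x \<in> E'"
      proof (cases "x \<in> U")
        case True
        then obtain i where "i \<in> I" "x \<in> B i" unfolding U_def by blast
        thus ?thesis using r[of i] by blast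
      next
        case False
        thus ?thesis using d by blast
      qed
    qed
  qed
  have img: "phi ` S \<subseteq> Pow (P - U) \<times> (\<Pi>\<^sub>E i\<in>I. Al i)"
  proof
    fix y assume "y \<in> phi ` S"
    then obtain E where E: "E \<in> S" "y = phi E" by blast
    have "E - U \<in> Pow (P - U)" using E SP by blast
    moreover have "restrict (\<lambda>i. E \<inter> B i) I \<in> (\<Pi>\<^sub>E i\<in>I. Al i)" using SA E by auto
    ultimately show "y \<in> Pow (P - U) \<times> (\<Pi>\<^sub>E i\<in>I. Al i)" using E unfolding phi_def by simp
  qed
  have finAl: "\<forall>i\<in>I. finite (Al i)" using AlB finB by (meson finite_Pow_iff finite_subset)
  have fin: "finite (Pow (P - U) \<times> (\<Pi>\<^sub>E i\<in>I. Al i))"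
    using finP finI finAl by (simp add: finite_PiE)
  have "card S \<le> card (Pow (P - U) \<times> (\<Pi>\<^sub>E i\<in>I. Al i))"
    by (rule card_inj_on_le[OF inj img fin])
  also have "\<dots> = 2 ^ card (P - U) * (\<Prod>i\<in>I. card (Al i))"
    using finP finI by (simp add: card_cartesian_product card_Pow card_PiE)
  finally show ?thesis using cPU by simp
qed

lemma bad_pair_count:
  assumes u: "u < n" and v: "v < n" and uv: "u \<noteq> v"
  shows "card {E \<in> graphs n. \<forall>w<n. \<not> ({u,w} \<in> E \<and> {v,w} \<in> E)}
         \<le> 2 ^ (card (pairs n) - 2 * (n - 2)) * 3 ^ (n - 2)"
proof -
  define I where "I = {0..<n} - {u, v}"
  define B where "B = (\<lambda>w. {{u,w},{v,w}} :: nat set set)"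
  define Al where "Al = (\<lambda>w. Pow (B w) - {B w})"
  have cI: "card I = n - 2" unfolding I_def using u v uv by (simp add: card_Diff_subset)
  have cB: "card (B w) = 2" if "w \<in> I" for w
    using that uv unfolding B_def I_def by (auto simp: doubleton_eq_iff)
  have cAl: "card (Al w) = 3" if "w \<in> I" for w
  proof -
    have "finite (Pow (B w))" unfolding B_def by simp
    hence "card (Al w) = card (Pow (B w)) - 1" unfolding Al_def by (simp add: card_Diff_singleton)
    also have "\<dots> = 3" using cB[OF that] card_Pow[of "B w"] unfolding B_def by simp
    finally show ?thesis .
  qed
  have "card {E \<in> graphs n. \<forall>w<n. \<not> ({u,w} \<in> E \<and> {v,w} \<in> E)}
        \<le> 2 ^ (card (pairs n) - (\<Sum>i\<in>I. card (B i))) * (\<Prod>i\<in>I. card (Al i))"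
  proof (rule block_count[OF finite_pairs])
    show "finite I" unfolding I_def by simp
    show "\<forall>i\<in>I. B i \<subseteq> pairs n" unfolding I_def B_def pairs_eq using u v by auto
    show "\<forall>i\<in>I. \<forall>j\<in>I. i \<noteq> j \<longrightarrow> B i \<inter> B j = {}"
      unfolding I_def B_def by (auto simp: doubleton_eq_iff)
    show "{E \<in> graphs n. \<forall>w<n. \<not> ({u, w} \<in> E \<and> {v, w} \<in> E)} \<subseteq> Pow (pairs n)"
      unfolding graphs_eq by blast
    show "\<forall>E\<in>{E \<in> graphs n. \<forall>w<n. \<not> ({u, w} \<in> E \<and> {v, w} \<in> E)}. \<forall>i\<in>I. E \<inter> B i \<in> Al i"
      unfolding Al_def B_def I_def by auto
    show "\<forall>i\<in>I. Al i \<subseteq> Pow (B i)" unfolding Al_def by blast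
  qed
  also have "(\<Sum>i\<in>I. card (B i)) = 2 * (n - 2)" using cB cI by simp
  also have "(\<Prod>i\<in>I. card (Al i)) = 3 ^ (n - 2)" using cAl cI by simp
  finally show ?thesis .
qed

lemma fix_count:
  assumes s: "s \<in> perms n" and A: "A \<subseteq> {0..<n}" and As: "A \<inter> s ` A = {}"
    and W: "W = {0..<n} - A - s ` A"
  shows "card {E \<in> graphs n. act s E = E} \<le> 2 ^ (card (pairs n) - card A * card W)
         \<and> 2 * (card A * card W) \<le> card (pairs n)"
proof -
  have sp: "s permutes {0..<n}" using s unfolding perms_def by simp
  have sinj: "inj s" using permutes_inj[OF sp] .
  have sn: "\<And>x. x < n \<Longrightarrow> s x < n" using permutes_in_image[OF sp] by simp
  define I where "I = A \<times> W"
  define B where "B = (\<lambda>(a,w). {{a,w},{s a, s w}} :: nat set set)"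
  define Al where "Al = (\<lambda>i. {{}, B i})"
  have finI: "finite I"
  proof -
    have "finite A" using finite_subset[OF A] by simp
    moreover have "finite W" using W by simp
    ultimately show ?thesis unfolding I_def by simp
  qed
  have Wn: "W \<subseteq> {0..<n}" using W by blast
  have mem: "a \<in> A \<Longrightarrow> w \<in> W \<Longrightarrow> a \<noteq> w \<and> s a \<noteq> s w \<and> a \<noteq> s a \<and> s a \<noteq> w \<and> w \<noteq> s a
     \<and> a < n \<and> w < n" for a w
  proof -
    assume a: "a \<in> A" and w: "w \<in> W"
    have "a \<noteq> w" using a w W by blast
    moreover have "s a \<noteq> s w" using calculation sinj by (meson injD)
    moreover have "a \<noteq> s a" using As a by blast
    moreover have "s a \<noteq> w" using a w W by blast
    ultimately show ?thesis using a w A Wn by auto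
  qed
  have cB: "card (B i) = 2" if iI: "i \<in> I" for i
  proof -
    obtain a w where i: "i = (a, w)" "a \<in> A" "w \<in> W" using iI unfolding I_def by blast
    have "{a,w} \<noteq> {s a, s w}" using mem[OF i(2,3)] by (auto simp: doubleton_eq_iff)
    thus ?thesis unfolding B_def i by simp
  qed
  have cAl: "card (Al i) = 2" if "i \<in> I" for i
  proof -
    have "B i \<noteq> {}" using cB[OF that] by auto
    thus ?thesis unfolding Al_def by simp
  qed
  have BP: "\<forall>i\<in>I. B i \<subseteq> pairs n"
  proof
    fix i assume "i \<in> I"
    then obtain a w where i: "i = (a, w)" "a \<in> A" "w \<in> W" unfolding I_def by blast
    have "s a < n" "s w < n" using mem[OF i(2,3)] sn by auto
    thus "B i \<subseteq> pairs n" using mem[OF i(2,3)] unfolding B_def i pairs_eq by auto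
  qed
  have disj: "\<forall>i\<in>I. \<forall>j\<in>I. i \<noteq> j \<longrightarrow> B i \<inter> B j = {}"
  proof (intro ballI impI)
    fix i j assume "i \<in> I" "j \<in> I" "i \<noteq> j"
    then obtain a w a' w' where i: "i = (a, w)" "a \<in> A" "w \<in> W" and j: "j = (a', w')" "a' \<in> A" "w' \<in> W"
      unfolding I_def by blast
    have ne: "a \<noteq> a' \<or> w \<noteq> w'" using \<open>i \<noteq> j\<close> i j by auto
    have AW: "\<And>x. x \<in> A \<Longrightarrow> x \<notin> W" "\<And>x. x \<in> A \<Longrightarrow> s x \<notin> W" "\<And>x. x \<in> A \<Longrightarrow> s x \<notin> A"
      using W As by auto
    have sne: "s a \<noteq> s a' \<or> s w \<noteq> s w'" using ne sinj by (meson injD)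
    have 1: "{a,w} \<noteq> {a',w'}"
    proof
      assume "{a,w} = {a',w'}"
      hence "a = a' \<and> w = w' \<or> a = w' \<and> w = a'" by (simp add: doubleton_eq_iff)
      moreover have "a \<noteq> w'" using AW(1)[OF i(2)] j(3) by blast
      ultimately show False using ne by blast
    qed
    have 2: "{a,w} \<noteq> {s a', s w'}"
    proof
      assume "{a,w} = {s a', s w'}"
      hence "s a' \<in> {a, w}" by auto
      thus False using AW(2)[OF j(2)] AW(3)[OF j(2)] i(2) i(3) by blast
    qed
    have 3: "{s a, s w} \<noteq> {a',w'}"
    proof
      assume "{s a, s w} = {a',w'}"
      hence "s a \<in> {a', w'}" by auto
      thus False using AW(2)[OF i(2)] AW(3)[OF i(2)] j(2) j(3) by blast
    qed
    have 4: "{s a, s w} \<noteq> {s a', s w'}"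
    proof
      assume "{s a, s w} = {s a', s w'}"
      hence "s ` {a, w} = s ` {a', w'}" by (simp only: image_insert image_empty)
      hence "{a,w} = {a',w'}" by (rule inj_image_eq_iff[OF sinj, THEN iffD1])
      thus False using 1 by simp
    qed
    show "B i \<inter> B j = {}" unfolding B_def i j using 1 2 3 4 by auto
  qed
  have inv: "E \<inter> B i \<in> Al i" if E: "E \<in> {E \<in> graphs n. act s E = E}" and i: "i \<in> I" for E i
  proof -
    obtain a w where i: "i = (a, w)" "a \<in> A" "w \<in> W" using i unfolding I_def by blast
    have fixE: "act s E = E" using E by simp
    have "{a,w} \<in> E \<longleftrightarrow> {s a, s w} \<in> E"
    proof
      assume "{a,w} \<in> E"
      hence "s ` {a,w} \<in> act s E" unfolding act_def by blast
      thus "{s a, s w} \<in> E" using fixE by simp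
    next
      assume "{s a, s w} \<in> E"
      hence "{s a, s w} \<in> act s E" using fixE by simp
      then obtain e where e: "e \<in> E" "s ` e = {s a, s w}" unfolding act_def by blast
      hence "s ` e = s ` {a, w}" by (simp only: image_insert image_empty)
      hence "e = {a, w}" by (rule inj_image_eq_iff[OF sinj, THEN iffD1])
      thus "{a,w} \<in> E" using e by simp
    qed
    hence "E \<inter> B i = {} \<or> E \<inter> B i = B i" unfolding B_def i by auto
    thus ?thesis unfolding Al_def by auto
  qed
  have "card {E \<in> graphs n. act s E = E}
        \<le> 2 ^ (card (pairs n) - (\<Sum>i\<in>I. card (B i))) * (\<Prod>i\<in>I. card (Al i))"
  proof (rule block_count[OF finite_pairs finI BP disj])
    show "{E \<in> graphs n. act s E = E} \<subseteq> Pow (pairs n)" unfolding graphs_eq by blast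
    show "\<forall>E\<in>{E \<in> graphs n. act s E = E}. \<forall>i\<in>I. E \<inter> B i \<in> Al i" using inv by blast
    show "\<forall>i\<in>I. Al i \<subseteq> Pow (B i)" unfolding Al_def by blast
  qed
  also have sB: "(\<Sum>i\<in>I. card (B i)) = 2 * (card A * card W)"
  proof -
    have "(\<Sum>i\<in>I. card (B i)) = (\<Sum>i\<in>I. 2)" by (rule sum.cong) (simp_all add: cB)
    thus ?thesis unfolding I_def by (simp add: card_cartesian_product)
  qed
  also have "(\<Prod>i\<in>I. card (Al i)) = 2 ^ (card A * card W)"
  proof -
    have "(\<Prod>i\<in>I. card (Al i)) = (\<Prod>i\<in>I. 2)" by (rule prod.cong) (simp_all add: cAl)
    thus ?thesis unfolding I_def by (simp add: card_cartesian_product)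
  qed
  finally have le: "card {E \<in> graphs n. act s E = E} \<le> 2 ^ (card (pairs n) - 2 * (card A * card W)) * 2 ^ (card A * card W)" .
  have "(\<Sum>i\<in>I. card (B i)) \<le> card (pairs n)"
  proof -
    have finB: "\<forall>i\<in>I. finite (B i)" unfolding B_def by (auto split: prod.splits)
    have "(\<Sum>i\<in>I. card (B i)) = card (\<Union>i\<in>I. B i)"
      using card_UN_disjoint[OF finI finB disj] by simp
    also have "\<dots> \<le> card (pairs n)" using BP finite_pairs by (intro card_mono) auto
    finally show ?thesis .
  qed
  hence tN: "2 * (card A * card W) \<le> card (pairs n)" using sB by simp
  hence "2 ^ (card (pairs n) - 2 * (card A * card W)) * 2 ^ (card A * card W) = (2::nat) ^ (card (pairs n) - card A * card W)"
    by (simp add: power_add[symmetric])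
  thus ?thesis using le tN by simp
qed



lemma greedy:
  assumes "finite M" and sp: "s permutes S" and "\<forall>x\<in>M. s x \<noteq> x"
  shows "\<exists>A\<subseteq>M. A \<inter> s ` A = {} \<and> card M \<le> 3 * card A"
  using assms(1,3)
proof (induction "card M" arbitrary: M rule: less_induct)
  case less
  show ?case
  proof (cases "M = {}")
    case True thus ?thesis by auto
  next
    case False
    then obtain a where a: "a \<in> M" by blast
    define M' where "M' = M - {a, s a, inv s a}"
    have "M' \<subset> M" using a unfolding M'_def by blast
    hence lt: "card M' < card M" using less.prems(1) by (simp add: psubset_card_mono)
    have finM': "finite M'" using less.prems(1) unfolding M'_def by simp
    have fixM': "\<forall>x\<in>M'. s x \<noteq> x" using less.prems(2) unfolding M'_def by simp
    obtain A' where A': "A' \<subseteq> M'" "A' \<inter> s ` A' = {}" "card M' \<le> 3 * card A'"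
      using less.hyps[OF lt finM' fixM'] by blast
    define A where "A = insert a A'"
    have aA': "a \<notin> A'" using A'(1) unfolding M'_def by blast
    have "A \<subseteq> M" using A'(1) a unfolding A_def M'_def by blast
    moreover have "A \<inter> s ` A = {}"
    proof -
      have "a \<noteq> s a" using less.prems(2) a by auto
      moreover have "a \<notin> s ` A'"
      proof
        assume "a \<in> s ` A'"
        then obtain x where x: "x \<in> A'" "a = s x" by blast
        hence "inv s a = x" using permutes_inverses(2)[OF sp] by simp
        thus False using x(1) A'(1) unfolding M'_def by blast
      qed
      moreover have "s a \<notin> A'" using A'(1) unfolding M'_def by blast
      ultimately show ?thesis using A'(2) unfolding A_def by auto
    qed
    moreover have "card M \<le> 3 * card A"
    proof -
      have "M \<subseteq> M' \<union> {a, s a, inv s a}" unfolding M'_def by blast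
      hence "card M \<le> card (M' \<union> {a, s a, inv s a})" using finM' by (intro card_mono) auto
      also have "\<dots> \<le> card M' + card {a, s a, inv s a}" by (rule card_Un_le)
      also have "card {a, s a, inv s a} \<le> 3" by (rule order_trans[OF card_insert_le_m1]) (auto simp: card_insert_le_m1)
      finally have "card M \<le> card M' + 3" by simp
      moreover have "card A = card A' + 1" unfolding A_def using aA' finite_subset[OF A'(1) finM'] by simp
      ultimately show ?thesis using A'(3) by simp
    qed
    ultimately show ?thesis by blast
  qed
qed

definition supp :: "(nat \<Rightarrow> nat) \<Rightarrow> nat set" where
  "supp s = {x. s x \<noteq> x}"

lemma supp_sub: "s \<in> perms n \<Longrightarrow> supp s \<subseteq> {0..<n}"
  unfolding supp_def perms_def using permutes_not_in by fastforce

lemma supp_nonempty: "s \<noteq> id \<Longrightarrow> supp s \<noteq> {}"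
  unfolding supp_def by auto

lemma perm_fix_bound:
  assumes s: "s \<in> perms n" and n6: "6 \<le> n"
  shows "\<exists>t. card (supp s) * n \<le> 24 * t \<and> 2 * t \<le> card (pairs n) \<and>
            card {E \<in> graphs n. act s E = E} \<le> 2 ^ (card (pairs n) - t)"
proof -
  have sp: "s permutes {0..<n}" using s unfolding perms_def by simp
  define M where "M = supp s"
  have Mn: "M \<subseteq> {0..<n}" using supp_sub[OF s] unfolding M_def .
  have finM: "finite M" using Mn finite_subset by blast
  have mn: "card M \<le> n" using card_mono[OF _ Mn] by simp
  obtain A0 where A0: "A0 \<subseteq> M" "A0 \<inter> s ` A0 = {}" "card M \<le> 3 * card A0"
    using greedy[OF finM sp] unfolding M_def supp_def by auto
  define k where "k = (card M + 11) div 12"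
  have k1: "card M \<le> 12 * k" "12 * k \<le> card M + 11" unfolding k_def by auto
  have "k \<le> card A0" using A0(3) unfolding k_def by linarith
  then obtain A where A: "A \<subseteq> A0" "card A = k"
    using obtain_subset_with_card_n by metis
  have An: "A \<subseteq> {0..<n}" using A(1) A0(1) Mn by blast
  have As: "A \<inter> s ` A = {}" using A(1) A0(2) by blast
  define W where "W = {0..<n} - A - s ` A"
  have finA: "finite A" using An finite_subset by blast
  have cW: "n \<le> card W + 2 * k"
  proof -
    have "{0..<n} \<subseteq> W \<union> A \<union> s ` A" unfolding W_def by blast
    hence "n \<le> card (W \<union> A \<union> s ` A)" using finA by (metis card_atLeastLessThan card_mono finite_Un finite_atLeastLessThan finite_imageI W_def finite_Diff diff_zero)
    also have "\<dots> \<le> card W + card A + card (s ` A)" by (meson card_Un_le add_le_mono order_trans le_refl)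
    also have "card (s ` A) \<le> card A" by (rule card_image_le[OF finA])
    finally show ?thesis using A(2) by linarith
  qed
  have "4 * k \<le> n" using k1 mn n6 by linarith
  hence w2: "n \<le> 2 * card W" using cW by linarith
  define t where "t = card A * card W"
  have fc: "card {E \<in> graphs n. act s E = E} \<le> 2 ^ (card (pairs n) - t) \<and> 2 * t \<le> card (pairs n)"
    using fix_count[OF s An As W_def] unfolding t_def by blast
  have "card M * n \<le> (12 * k) * (2 * card W)" using k1(1) w2 by (intro mult_mono) auto
  hence "card (supp s) * n \<le> 24 * t" unfolding t_def M_def using A(2) by simp
  thus ?thesis using fc by blast
qed

lemma card_perms_supp:
  "card {s \<in> perms n. card (supp s) = m} \<le> n ^ (2 * m)"
proof -
  let ?Ms = "{M. M \<subseteq> {0..<n} \<and> card M = m}"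
  have sub: "{s \<in> perms n. card (supp s) = m} \<subseteq> (\<Union>M\<in>?Ms. {s \<in> perms n. supp s \<subseteq> M})"
  proof
    fix s assume "s \<in> {s \<in> perms n. card (supp s) = m}"
    hence s: "s \<in> perms n" "card (supp s) = m" by auto
    hence "supp s \<in> ?Ms" using supp_sub[OF s(1)] by simp
    thus "s \<in> (\<Union>M\<in>?Ms. {s \<in> perms n. supp s \<subseteq> M})" using s(1) by (intro UN_I[of "supp s"]) auto
  qed
  have finMs: "finite ?Ms" by (rule finite_subset[of _ "Pow {0..<n}"]) auto
  have inner: "card {s \<in> perms n. supp s \<subseteq> M} \<le> n ^ m" if M: "M \<in> ?Ms" for M
  proof -
    have "inj_on (\<lambda>s. restrict s M) {s \<in> perms n. supp s \<subseteq> M}"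
    proof (rule inj_onI)
      fix s s' assume s: "s \<in> {s \<in> perms n. supp s \<subseteq> M}" and s': "s' \<in> {s \<in> perms n. supp s \<subseteq> M}"
        and eq: "restrict s M = restrict s' M"
      show "s = s'"
      proof
        fix x show "s x = s' x"
        proof (cases "x \<in> M")
          case True thus ?thesis using eq by (metis restrict_apply')
        next
          case False
          hence "s x = x" "s' x = x" using s s' unfolding supp_def by blast+
          thus ?thesis by simp
        qed
      qed
    qed
    moreover have "(\<lambda>s. restrict s M) ` {s \<in> perms n. supp s \<subseteq> M} \<subseteq> M \<rightarrow>\<^sub>E {0..<n}"
    proof
      fix f assume "f \<in> (\<lambda>s. restrict s M) ` {s \<in> perms n. supp s \<subseteq> M}"
      then obtain s where s: "s \<in> perms n" "f = restrict s M" by blast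
      have "s x \<in> {0..<n}" if x: "x \<in> M" for x
      proof -
        have sp: "s permutes {0..<n}" using s(1) unfolding perms_def by simp
        have "x \<in> {0..<n}" using x M by blast
        thus ?thesis using permutes_in_image[OF sp] by simp
      qed
      thus "f \<in> M \<rightarrow>\<^sub>E {0..<n}" using s(2) by auto
    qed
    moreover have "finite (M \<rightarrow>\<^sub>E {0..<n})" using M finite_subset by (intro finite_PiE) auto
    ultimately have "card {s \<in> perms n. supp s \<subseteq> M} \<le> card (M \<rightarrow>\<^sub>E {0..<n})"
      by (rule card_inj_on_le)
    also have "\<dots> = n ^ m" using M finite_subset[of M "{0..<n}"] by (simp add: card_PiE)
    finally show ?thesis .
  qed
  have "card {s \<in> perms n. card (supp s) = m} \<le> card (\<Union>M\<in>?Ms. {s \<in> perms n. supp s \<subseteq> M})"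
    using finite_perms sub by (intro card_mono) auto
  also have "\<dots> \<le> (\<Sum>M\<in>?Ms. card {s \<in> perms n. supp s \<subseteq> M})" by (rule card_UN_le[OF finMs])
  also have "\<dots> \<le> (\<Sum>M\<in>?Ms. n ^ m)" by (rule sum_mono) (rule inner)
  also have "\<dots> = (n choose m) * n ^ m" using n_subsets[of "{0..<n}" m] by simp
  also have "\<dots> \<le> n ^ m * n ^ m"
  proof (cases "m \<le> n")
    case True thus ?thesis using binomial_le_pow[OF True] by simp
  next
    case False
    hence "n choose m = 0" by (simp add: binomial_eq_0)
    thus ?thesis by (metis mult_zero_left zero_le)
  qed
  also have "\<dots> = n ^ (2 * m)" by (simp add: power_add[symmetric] mult_2)
  finally show ?thesis .
qed



lemma double_count:
  assumes "finite A" "finite B"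
  shows "(\<Sum>a\<in>A. card {b \<in> B. R a b}) = (\<Sum>b\<in>B. card {a \<in> A. R a b})"
proof -
  have cf: "card {x \<in> X. P x} = (\<Sum>x\<in>X. if P x then 1 else 0)" if "finite X" for X :: "'z set" and P
    using sum.inter_filter[OF that, of "\<lambda>_. (1::nat)" P] by simp
  have "(\<Sum>a\<in>A. card {b \<in> B. R a b}) = (\<Sum>a\<in>A. \<Sum>b\<in>B. if R a b then 1 else 0)"
    by (rule sum.cong[OF refl]) (rule cf[OF assms(2)])
  also have "\<dots> = (\<Sum>b\<in>B. \<Sum>a\<in>A. if R a b then 1 else 0)" by (rule sum.swap)
  also have "\<dots> = (\<Sum>b\<in>B. card {a \<in> A. R a b})"
    by (rule sum.cong[OF refl]) (rule cf[OF assms(1), symmetric])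
  finally show ?thesis .
qed

definition badG :: "nat \<Rightarrow> nat set set set" where
  "badG n = {E \<in> graphs n. \<not> good n E}"

lemma finite_badG: "finite (badG n)"
  unfolding badG_def using finite_graphs by simp

lemma badC_bound:
  "fact n * card (badC n) \<le> card (badG n) +
     (\<Sum>s\<in>perms n - {id}. card {E \<in> graphs n. act s E = E})"
proof -
  let ?P' = "perms n - {id}"
  have finC: "\<forall>C\<in>badC n. finite C"
  proof
    fix C assume "C \<in> badC n"
    hence "C \<in> iso_classes n" unfolding badC_def by simp
    thus "finite C" using finite_subset[OF class_sub finite_graphs] by blast
  qed
  have disjC: "\<forall>C\<in>badC n. \<forall>D\<in>badC n. C \<noteq> D \<longrightarrow> C \<inter> D = {}"
    unfolding badC_def iso_classes_eq using quotient_disj[OF equiv_isoR] by blast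
  have sub: "\<Union>(badC n) \<subseteq> badG n"
    unfolding badC_def badG_def using class_sub by blast
  have "fact n * card (badC n) = (\<Sum>C\<in>badC n. fact n)" by simp
  also have "\<dots> \<le> (\<Sum>C\<in>badC n. \<Sum>G\<in>C. card (aut n G))"
    by (rule sum_mono) (use fact_le_aut_sum badC_def in auto)
  also have "\<dots> = (\<Sum>G\<in>\<Union>(badC n). card (aut n G))"
    using sum.Union_disjoint[OF finC disjC, of "\<lambda>G. card (aut n G)"] by simp
  also have "\<dots> \<le> (\<Sum>G\<in>badG n. card (aut n G))"
    by (rule sum_mono2[OF finite_badG sub]) simp
  also have "\<dots> \<le> (\<Sum>G\<in>badG n. 1 + card {s \<in> ?P'. act s G = G})"
  proof (rule sum_mono)
    fix G
    have "aut n G \<subseteq> insert id {s \<in> ?P'. act s G = G}" unfolding aut_def by auto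
    hence "card (aut n G) \<le> card (insert id {s \<in> ?P'. act s G = G})"
      using finite_perms by (intro card_mono) auto
    also have "\<dots> \<le> 1 + card {s \<in> ?P'. act s G = G}"
    proof -
      have fin: "finite {s \<in> ?P'. act s G = G}" using finite_perms by simp
      show ?thesis using card_insert_if[OF fin, of id] by simp
    qed
    finally show "card (aut n G) \<le> 1 + card {s \<in> ?P'. act s G = G}" .
  qed
  also have "\<dots> = card (badG n) + (\<Sum>G\<in>badG n. card {s \<in> ?P'. act s G = G})"
    unfolding sum.distrib by simp
  also have "(\<Sum>G\<in>badG n. card {s \<in> ?P'. act s G = G}) \<le> (\<Sum>G\<in>graphs n. card {s \<in> ?P'. act s G = G})"
    by (rule sum_mono2[OF finite_graphs]) (auto simp: badG_def)
  also have "\<dots> = (\<Sum>s\<in>?P'. card {G \<in> graphs n. act s G = G})"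
    by (rule double_count) (use finite_graphs finite_perms in auto)
  finally show ?thesis by simp
qed

lemma badG_bound:
  "card (badG n) \<le> n * n * (2 ^ (card (pairs n) - 2 * (n - 2)) * 3 ^ (n - 2))"
proof -
  let ?I = "{p \<in> {0..<n} \<times> {0..<n}. fst p \<noteq> snd p}"
  let ?S = "\<lambda>p. {E \<in> graphs n. \<forall>w<n. \<not> ({fst p, w} \<in> E \<and> {snd p, w} \<in> E)}"
  have "badG n \<subseteq> (\<Union>p\<in>?I. ?S p)"
  proof
    fix E assume "E \<in> badG n"
    hence E: "E \<in> graphs n" "\<not> good n E" unfolding badG_def by auto
    then obtain u v where "u < n" "v < n" "u \<noteq> v" "\<not> (\<exists>w<n. {u,w} \<in> E \<and> {v,w} \<in> E)"
      unfolding good_def by blast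
    thus "E \<in> (\<Union>p\<in>?I. ?S p)" using E(1) by (intro UN_I[of "(u,v)"]) auto
  qed
  hence "card (badG n) \<le> card (\<Union>p\<in>?I. ?S p)"
    using finite_graphs by (intro card_mono) auto
  also have "\<dots> \<le> (\<Sum>p\<in>?I. card (?S p))" by (rule card_UN_le) simp
  also have "\<dots> \<le> (\<Sum>p\<in>?I. 2 ^ (card (pairs n) - 2 * (n - 2)) * 3 ^ (n - 2))"
    by (rule sum_mono) (use bad_pair_count in auto)
  also have "\<dots> = card ?I * (2 ^ (card (pairs n) - 2 * (n - 2)) * 3 ^ (n - 2))" by simp
  also have "card ?I \<le> n * n"
    using card_mono[of "{0..<n} \<times> {0..<n}" ?I] by (simp add: card_cartesian_product)
  hence "card ?I * (2 ^ (card (pairs n) - 2 * (n - 2)) * 3 ^ (n - 2))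
         \<le> n * n * (2 ^ (card (pairs n) - 2 * (n - 2)) * 3 ^ (n - 2))" by (rule mult_right_mono) simp
  finally show ?thesis .
qed



lemma fix_one_bound:
  assumes s: "s \<in> perms n" and n6: "6 \<le> n"
  shows "real (card {E \<in> graphs n. act s E = E}) \<le> 2 ^ card (pairs n) * (1 / 2 powr (real n / 24)) ^ card (supp s)"
proof -
  obtain t where t: "card (supp s) * n \<le> 24 * t" "2 * t \<le> card (pairs n)"
    "card {E \<in> graphs n. act s E = E} \<le> 2 ^ (card (pairs n) - t)"
    using perm_fix_bound[OF s n6] by blast
  let ?N = "card (pairs n)" and ?m = "card (supp s)"
  have "(2::real) ^ ?N = 2 ^ (?N - t) * 2 ^ t" using t(2) by (simp add: power_add[symmetric])
  hence e: "(2::real) ^ (?N - t) = 2 ^ ?N / 2 ^ t" by simp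
  have "(2 powr (real n / 24)) ^ ?m = 2 powr (real ?m * (real n / 24))"
    by (simp add: powr_power)
  also have "\<dots> \<le> 2 powr (real t)"
  proof (rule powr_mono)
    have "real (?m * n) \<le> real (24 * t)" using t(1) by linarith
    thus "real ?m * (real n / 24) \<le> real t" by simp
  qed simp
  also have "\<dots> = 2 ^ t" by (simp add: powr_realpow)
  finally have yt: "(2 powr (real n / 24)) ^ ?m \<le> 2 ^ t" .
  have "real (card {E \<in> graphs n. act s E = E}) \<le> 2 ^ (?N - t)"
  proof -
    have "real (card {E \<in> graphs n. act s E = E}) \<le> real ((2::nat) ^ (?N - t))"
      using t(3) by (rule of_nat_mono)
    thus ?thesis by simp
  qed
  also have "\<dots> = 2 ^ ?N / 2 ^ t" by (rule e)
  also have "\<dots> \<le> 2 ^ ?N / (2 powr (real n / 24)) ^ ?m"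
    by (rule divide_left_mono[OF yt]) auto
  also have "\<dots> = 2 ^ ?N * (1 / 2 powr (real n / 24)) ^ ?m" by (simp add: power_one_over)
  finally show ?thesis .
qed

lemma fix_sum_bound:
  assumes n6: "6 \<le> n" and ny: "real n ^ 2 \<le> 2 powr (real n / 24)"
  shows "real (\<Sum>s\<in>perms n - {id}. card {E \<in> graphs n. act s E = E})
         \<le> 2 ^ card (pairs n) * (real n * (real n ^ 2 / 2 powr (real n / 24)))"
proof -
  let ?P' = "perms n - {id}" and ?N = "card (pairs n)"
  define y where "y = 2 powr (real n / 24)"
  define x where "x = real n ^ 2 / y"
  have ypos: "y > 0" unfolding y_def by simp
  have x0: "0 \<le> x" and x1: "x \<le> 1" using ny ypos unfolding x_def y_def[symmetric] by auto
  have finP': "finite ?P'" using finite_perms by simp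
  have "real (\<Sum>s\<in>?P'. card {E \<in> graphs n. act s E = E}) = (\<Sum>s\<in>?P'. real (card {E \<in> graphs n. act s E = E}))"
    by simp
  also have "\<dots> \<le> (\<Sum>s\<in>?P'. 2 ^ ?N * (1 / y) ^ card (supp s))"
    by (rule sum_mono) (use fix_one_bound n6 in \<open>auto simp: y_def\<close>)
  also have "\<dots> = 2 ^ ?N * (\<Sum>s\<in>?P'. (1 / y) ^ card (supp s))" by (simp add: sum_distrib_left)
  finally have A: "real (\<Sum>s\<in>?P'. card {E \<in> graphs n. act s E = E}) \<le> 2 ^ ?N * (\<Sum>s\<in>?P'. (1 / y) ^ card (supp s))" .
  have "(\<Sum>s\<in>?P'. (1 / y) ^ card (supp s)) = (\<Sum>j\<in>{1..n}. \<Sum>s\<in>{s. s \<in> ?P' \<and> card (supp s) = j}. (1 / y) ^ card (supp s))"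
  proof (rule sum.group[symmetric, OF finP'])
    show "finite {1..n}" by simp
    show "(\<lambda>s. card (supp s)) ` ?P' \<subseteq> {1..n}"
    proof
      fix j assume "j \<in> (\<lambda>s. card (supp s)) ` ?P'"
      then obtain s where s: "s \<in> perms n" "s \<noteq> id" "j = card (supp s)" by blast
      have "supp s \<subseteq> {0..<n}" using supp_sub[OF s(1)] .
      moreover hence "finite (supp s)" using finite_subset by blast
      ultimately have "j \<le> n" "j \<noteq> 0" using s supp_nonempty card_mono[of "{0..<n}" "supp s"] by auto
      thus "j \<in> {1..n}" by simp
    qed
  qed
  also have "\<dots> \<le> (\<Sum>j\<in>{1..n}. x)"
  proof (rule sum_mono)
    fix j assume j: "j \<in> {1..n}"
    have "(\<Sum>s\<in>{s. s \<in> ?P' \<and> card (supp s) = j}. (1 / y) ^ card (supp s))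
          = real (card {s. s \<in> ?P' \<and> card (supp s) = j}) * (1 / y) ^ j" by simp
    also have "\<dots> \<le> real (n ^ (2 * j)) * (1 / y) ^ j"
    proof (rule mult_right_mono)
      have "card {s. s \<in> ?P' \<and> card (supp s) = j} \<le> card {s \<in> perms n. card (supp s) = j}"
        using finite_perms by (intro card_mono) auto
      also have "\<dots> \<le> n ^ (2 * j)" by (rule card_perms_supp)
      finally show "real (card {s. s \<in> ?P' \<and> card (supp s) = j}) \<le> real (n ^ (2 * j))" by linarith
    qed (use ypos in simp)
    also have "\<dots> = x ^ j" unfolding x_def by (simp add: power_mult power_divide power_one_over)
    also have "\<dots> \<le> x ^ 1" using j x0 x1 by (intro power_decreasing) auto
    finally show "(\<Sum>s\<in>{s. s \<in> ?P' \<and> card (supp s) = j}. (1 / y) ^ card (supp s)) \<le> x" by simp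
  qed
  also have "\<dots> = real n * x" by simp
  finally have T: "(\<Sum>s\<in>?P'. (1 / y) ^ card (supp s)) \<le> real n * x" .
  have "real (\<Sum>s\<in>?P'. card {E \<in> graphs n. act s E = E}) \<le> 2 ^ ?N * (real n * x)"
    by (rule order_trans[OF A mult_left_mono[OF T]]) simp
  thus ?thesis unfolding x_def y_def .
qed



lemma N_ge: "6 \<le> n \<Longrightarrow> 2 * (n - 2) \<le> card (pairs n)"
proof -
  assume n: "6 \<le> n"
  have "n * 4 \<le> n * (n - 1)" using n by (intro mult_le_mono2) linarith
  thus ?thesis unfolding card_pairs choose_two by linarith
qed

lemma badG_real:
  assumes n: "6 \<le> n"
  shows "real (card (badG n)) \<le> 2 ^ card (pairs n) * (real n ^ 2 * (3 / 4) ^ (n - 2))"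
proof -
  let ?N = "card (pairs n)" and ?d = "n - 2"
  have d: "2 * ?d \<le> ?N" using N_ge[OF n] .
  have "real (card (badG n)) \<le> real (n * n * (2 ^ (?N - 2 * ?d) * 3 ^ ?d))"
    using badG_bound[of n] by linarith
  also have "\<dots> = real n ^ 2 * (2 ^ (?N - 2 * ?d) * 3 ^ ?d)" by (simp add: power2_eq_square)
  also have "(2::real) ^ (?N - 2 * ?d) = 2 ^ ?N / 4 ^ ?d"
  proof -
    have "(2::real) ^ ?N = 2 ^ (?N - 2 * ?d) * 2 ^ (2 * ?d)" using d by (simp add: power_add[symmetric])
    moreover have "(2::real) ^ (2 * ?d) = 4 ^ ?d" by (simp add: power_mult)
    ultimately show ?thesis by simp
  qed
  also have "real n ^ 2 * (2 ^ ?N / 4 ^ ?d * 3 ^ ?d) = 2 ^ ?N * (real n ^ 2 * (3 / 4) ^ ?d)"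
    by (simp add: power_divide field_simps)
  finally show ?thesis .
qed

lemma ratio_bound:
  assumes n6: "6 \<le> n" and ny: "real n ^ 2 \<le> 2 powr (real n / 24)"
  shows "real (card (unique_classes n)) / real (card (iso_classes n))
         \<le> fact n / 2 ^ card (pairs n) + real n ^ 2 * (3 / 4) ^ (n - 2) + real n * (real n ^ 2 / 2 powr (real n / 24))"
proof -
  let ?N = "card (pairs n)" and ?U = "card (unique_classes n)" and ?IC = "card (iso_classes n)"
    and ?B = "card (badC n)"
  let ?S = "(\<Sum>s\<in>perms n - {id}. card {E \<in> graphs n. act s E = E})"
  have fpos: "(fact n :: real) > 0" by simp
  have Npos: "(2::real) ^ ?N > 0" by simp
  have "real ((2::nat) ^ ?N) \<le> real (?IC * fact n)"
    using classes_lower[of n] by (rule of_nat_mono)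
  hence ic: "(2::real) ^ ?N \<le> real ?IC * fact n" by simp
  have icpos: "real ?IC > 0"
  proof (rule ccontr)
    assume "\<not> real ?IC > 0"
    hence "real ?IC = 0" by simp
    thus False using ic Npos by simp
  qed
  have u: "real ?U \<le> real ?B + 1" using unique_le[of n] by linarith
  have "real (fact n * ?B) \<le> real (card (badG n) + ?S)"
    using badC_bound[of n] by (rule of_nat_mono)
  hence b: "fact n * real ?B \<le> real (card (badG n)) + real ?S" by simp
  have "real ?U / real ?IC \<le> (real ?B + 1) / real ?IC"
    using u icpos by (simp add: divide_right_mono)
  also have "\<dots> \<le> (real ?B + 1) * fact n / 2 ^ ?N"
  proof -
    have "1 / real ?IC \<le> fact n / 2 ^ ?N" using ic icpos Npos by (simp add: field_simps)
    hence "(real ?B + 1) * (1 / real ?IC) \<le> (real ?B + 1) * (fact n / 2 ^ ?N)"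
      by (intro mult_left_mono) auto
    thus ?thesis by simp
  qed
  also have "\<dots> = fact n / 2 ^ ?N + fact n * real ?B / 2 ^ ?N" by (simp add: field_simps)
  also have "fact n * real ?B / 2 ^ ?N \<le> (real (card (badG n)) + real ?S) / 2 ^ ?N"
    using b Npos by (simp add: divide_right_mono)
  also have "\<dots> \<le> (2 ^ ?N * (real n ^ 2 * (3 / 4) ^ (n - 2)) + 2 ^ ?N * (real n * (real n ^ 2 / 2 powr (real n / 24)))) / 2 ^ ?N"
    using badG_real[OF n6] fix_sum_bound[OF n6 ny] Npos by (intro divide_right_mono add_mono) auto
  also have "\<dots> = real n ^ 2 * (3 / 4) ^ (n - 2) + real n * (real n ^ 2 / 2 powr (real n / 24))"
    using Npos by (simp add: field_simps)
  finally show ?thesis by simp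
qed

lemma lim1: "(\<lambda>n. fact n / 2 ^ card (pairs n) :: real) \<longlonglongrightarrow> 0"
proof (rule tendsto_sandwich[of "\<lambda>_. 0" _ _ "\<lambda>n. exp (real n * ln (real n) - ln 2 * (real n * (real n - 1) / 2))"])
  show "\<forall>\<^sub>F n in sequentially. (0::real) \<le> fact n / 2 ^ card (pairs n)" by simp
  show "(\<lambda>n. exp (real n * ln (real n) - ln 2 * (real n * (real n - 1) / 2))) \<longlonglongrightarrow> 0" by real_asymp
  show "((\<lambda>_. 0) \<longlongrightarrow> (0::real)) sequentially" by simp
  show "\<forall>\<^sub>F n in sequentially. fact n / 2 ^ card (pairs n) \<le> exp (real n * ln (real n) - ln 2 * (real n * (real n - 1) / 2))"
  proof (rule eventually_sequentiallyI[of 1])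
    fix n :: nat assume n: "1 \<le> n"
    have N: "real (card (pairs n)) = real n * (real n - 1) / 2"
    proof -
      have "even (n * (n - 1))" by (cases "even n") auto
      hence "real (n * (n - 1) div 2) = real (n * (n - 1)) / 2" by (simp add: real_of_nat_div)
      thus ?thesis unfolding card_pairs choose_two using n by (simp add: of_nat_diff)
    qed
    have "(2::real) ^ card (pairs n) = 2 powr (real (card (pairs n)))" by (simp add: powr_realpow)
    also have "\<dots> = exp (ln 2 * (real n * (real n - 1) / 2))" unfolding powr_def N by (simp add: mult.commute)
    finally have "(2::real) ^ card (pairs n) = exp (ln 2 * (real n * (real n - 1) / 2))" .
    moreover have "(fact n :: real) \<le> exp (real n * ln (real n))"
    proof -
      have "(fact n :: real) \<le> real n ^ n" using fact_le_power[of n] by simp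
      also have "\<dots> = exp (real n * ln (real n))" using n by (simp add: exp_of_nat_mult)
      finally show ?thesis .
    qed
    ultimately show "fact n / 2 ^ card (pairs n) \<le> exp (real n * ln (real n) - ln 2 * (real n * (real n - 1) / 2))"
      by (simp add: exp_diff divide_right_mono)
  qed
qed

lemma lim2: "(\<lambda>n. real n ^ 2 * (3 / 4) ^ (n - 2) :: real) \<longlonglongrightarrow> 0"
proof -
  have "(\<lambda>n. 16 / 9 * (real n ^ 2 * (3 / 4) ^ n) :: real) \<longlonglongrightarrow> 0" by real_asymp
  moreover have "\<forall>\<^sub>F n in sequentially. 16 / 9 * (real n ^ 2 * (3 / 4) ^ n) = real n ^ 2 * (3 / 4) ^ (n - 2)"
  proof (rule eventually_sequentiallyI[of 2])
    fix n :: nat assume "2 \<le> n"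
    then obtain k where k: "n = k + 2" by (metis le_add_diff_inverse2)
    show "16 / 9 * (real n ^ 2 * (3 / 4) ^ n) = real n ^ 2 * (3 / 4) ^ (n - 2)"
      unfolding k by (simp add: power_add)
  qed
  ultimately show ?thesis by (rule Lim_transform_eventually)
qed

lemma lim3: "(\<lambda>n. real n * (real n ^ 2 / 2 powr (real n / 24))) \<longlonglongrightarrow> 0"
  by real_asymp

theorem theorem4:
  shows "(\<lambda>n. real (card (unique_classes n)) / real (card (iso_classes n))) \<longlonglongrightarrow> 0"
proof (rule tendsto_sandwich[of "\<lambda>_. 0" _ _
    "\<lambda>n. fact n / 2 ^ card (pairs n) + real n ^ 2 * (3 / 4) ^ (n - 2) + real n * (real n ^ 2 / 2 powr (real n / 24))"])
  show "\<forall>\<^sub>F n in sequentially. (0::real) \<le> real (card (unique_classes n)) / real (card (iso_classes n))" by simp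
  have ev: "\<forall>\<^sub>F n in sequentially. real n ^ 2 \<le> 2 powr (real n / 24)" by real_asymp
  show "\<forall>\<^sub>F n in sequentially. real (card (unique_classes n)) / real (card (iso_classes n))
     \<le> fact n / 2 ^ card (pairs n) + real n ^ 2 * (3 / 4) ^ (n - 2) + real n * (real n ^ 2 / 2 powr (real n / 24))"
    using ev eventually_ge_at_top[of 6] by eventually_elim (rule ratio_bound)
  show "((\<lambda>_. 0) \<longlongrightarrow> (0::real)) sequentially" by simp
  show "(\<lambda>n. fact n / 2 ^ card (pairs n) + real n ^ 2 * (3 / 4) ^ (n - 2) + real n * (real n ^ 2 / 2 powr (real n / 24))) \<longlonglongrightarrow> 0"
    using tendsto_add[OF tendsto_add[OF lim1 lim2] lim3] by simp
qed


end
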